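(* $$F^{1;2;2}_{1;1;1}\left[\left.\begin{matrix}2\\ \tfrac52\end{matrix};\begin{matrix}1,1\\ 2\end{matrix};\begin{matrix}\tfrac12,\tfrac12\\ 1\end{matrix}\right|1,1\right]=3\pi\log 2.$$
   Context: $(a)_n=\Gamma(a+n)/\Gamma(a)$. The Kampé de Fériet function is $$F^{A;B;B'}_{C;D;D'}\left[\left.\begin{matrix}a_1,\dots,a_A\\ c_1,\dots,c_C\end{matrix};\begin{matrix}b_1,\dots,b_B\\ d_1,\dots,d_D\end{matrix};\begin{matrix}b'_1,\dots,b'_{B'}\\ d'_1,\dots,d'_{D'}\end{matrix}\right|x,y\right]=\sum_{m,n\ge0}\frac{\prod_i(a_i)_{m+n}\prod_i(b_i)_m\prod_i(b'_i)_n}{\prod_i(c_i)_{m+n}\prod_i(d_i)_m\prod_i(d'_i)_n}\frac{x^my^n}{m!\,n!}.$$ *)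

theory Defs
  imports "HOL-Analysis.Analysis"
begin

text \<open>General term of the Kampe de Feriet double series
  F^{A;B;B'}_{C;D;D'}[as; bs; bs'; cs; ds; ds' | x, y], indexed by (m,n),
  with (a)_k written as pochhammer a k.\<close>
definition kdf_term ::
  "real list \<Rightarrow> real list \<Rightarrow> real list \<Rightarrow> real list \<Rightarrow> real list \<Rightarrow> real list
   \<Rightarrow> real \<Rightarrow> real \<Rightarrow> nat \<times> nat \<Rightarrow> real" where
  "kdf_term as cs bs ds bs' ds' x y = (\<lambda>(m, n).
     (prod_list (map (\<lambda>a. pochhammer a (m + n)) as)
      * prod_list (map (\<lambda>b. pochhammer b m) bs)
      * prod_list (map (\<lambda>b. pochhammer b n) bs'))
     / (prod_list (map (\<lambda>c. pochhammer c (m + n)) cs)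
      * prod_list (map (\<lambda>d. pochhammer d m) ds)
      * prod_list (map (\<lambda>d. pochhammer d n) ds'))
     * x ^ m * y ^ n / (fact m * fact n))"

end

theory Submission
  imports Defs "HOL-Real_Asymp.Real_Asymp"
begin

lemma series_integral:
  fixes c I :: "nat \<Rightarrow> real" and h P :: "real \<Rightarrow> real"
  assumes c0: "\<And>n. c n \<ge> 0"
    and h0: "\<And>t. 0 \<le> t \<Longrightarrow> t < 1 \<Longrightarrow> h t \<ge> 0"
    and ser: "\<And>t. 0 \<le> t \<Longrightarrow> t < 1 \<Longrightarrow> (\<lambda>n. c n * t^n) sums P t"
    and In: "\<And>n. ((\<lambda>t. h t * t^n) has_integral I n) {0..1}"
    and J: "((\<lambda>t. h t * P t) has_integral J) {0..1}"
  shows "(\<lambda>n. c n * I n) sums J"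
proof -
  define f where "f N t = (if t < 1 then h t * (\<Sum>n<N. c n * t^n) else 0)" for N t
  define g where "g t = (if t < 1 then h t * P t else 0)" for t
  have fint: "(f N has_integral (\<Sum>n<N. c n * I n)) {0..1}" for N
  proof -
    have hi: "((\<lambda>t. h t * (\<Sum>n<N. c n * t^n)) has_integral (\<Sum>n<N. c n * I n)) {0..1}"
    proof -
      have "((\<lambda>t. \<Sum>n<N. c n * (h t * t^n)) has_integral (\<Sum>n<N. c n * I n)) {0..1}"
        by (intro has_integral_sum has_integral_mult_right In) auto
      then show ?thesis by (simp add: sum_distrib_left mult_ac)
    qed
    show ?thesis
      by (rule has_integral_spike_finite[where S="{1}", OF _ _ hi]) (auto simp: f_def)
  qed
  have gint: "(g has_integral J) {0..1}"
    by (rule has_integral_spike_finite[where S="{1}", OF _ _ J]) (auto simp: g_def)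
  have psle: "(\<Sum>n<N. c n * t^n) \<le> P t" if "0 \<le> t" "t < 1" for N t
  proof -
    have "(\<Sum>n<N. c n * t^n) \<le> suminf (\<lambda>n. c n * t^n)"
      using ser[OF that] c0 that by (intro sum_le_suminf) (auto simp: sums_iff)
    then show ?thesis using ser[OF that] by (simp add: sums_iff)
  qed
  have fnn: "0 \<le> f N t" if "t \<in> {0..1}" for N t
    using that c0 h0 by (auto simp: f_def intro!: mult_nonneg_nonneg sum_nonneg)
  have intf: "integral {0..1} (f N) = (\<Sum>n<N. c n * I n)" for N
    using fint by (rule integral_unique)
  have mct: "g integrable_on {0..1} \<and> ((\<lambda>k. integral {0..1} (f k)) \<longlongrightarrow> integral {0..1} g) sequentially"
  proof (rule monotone_convergence_increasing)
    show "f k integrable_on {0..1}" for k using fint by blast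
    show "f k x \<le> f (Suc k) x" if "x \<in> {0..1}" for k x
      using that c0 h0 by (auto simp: f_def intro!: mult_left_mono)
    show "((\<lambda>k. f k x) \<longlongrightarrow> g x) sequentially" if "x \<in> {0..1}" for x
    proof (cases "x < 1")
      case True
      then have "(\<lambda>k. \<Sum>n<k. c n * x^n) \<longlonglongrightarrow> P x" using ser[of x] that by (auto simp: sums_def)
      then show ?thesis using True by (auto simp: f_def g_def intro!: tendsto_mult_left)
    qed (auto simp: f_def g_def)
    show "bounded (range (\<lambda>k. integral {0..1} (f k)))"
    proof -
      have "norm (integral {0..1} (f k)) \<le> J" for k
      proof -
        have "0 \<le> integral {0..1} (f k)" using fint fnn by (intro integral_nonneg) auto
        moreover have "integral {0..1} (f k) \<le> J"
          unfolding intf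
          by (rule has_integral_le[OF fint gint])
             (auto simp: f_def g_def h0 psle intro!: mult_left_mono)
        ultimately show ?thesis by simp
      qed
      then show ?thesis by (auto simp: bounded_iff)
    qed
  qed
  then have "(\<lambda>k. \<Sum>n<k. c n * I n) \<longlonglongrightarrow> J"
    using intf integral_unique[OF gint] by simp
  then show ?thesis by (simp add: sums_def)
qed

definition bb :: "nat \<Rightarrow> real" where "bb n = pochhammer (1/2) n / fact n"

lemma bb_nonneg: "bb n \<ge> 0"
  by (simp add: bb_def pochhammer_nonneg)

lemma bb_Suc: "bb (Suc n) = bb n * (2*n+1) / (2*n+2)"
  by (simp add: bb_def pochhammer_Suc field_simps)

lemma binom_ser:
  assumes "0 \<le> t" "t < 1"
  shows "(\<lambda>n. bb n * t^n) sums (1-t) powr (1/2 - 1)"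
proof -
  have "(\<lambda>n. ((-1/2) gchoose n) * (-t)^n) sums (1 + (-t)) powr (-1/2)"
    using assms by (intro gen_binomial_real) auto
  moreover have "((-1/2) gchoose n) * (-t)^n = bb n * t^n" for n
  proof -
    have e1: "((-1/2::real) gchoose n) = (-1)^n * pochhammer (1/2) n / fact n"
      using gbinomial_pochhammer[of "-1/2::real" n] by simp
    have e2: "(-t)^n = (-1)^n * t^n" by (rule power_minus)
    have e3: "(-1::real)^n * (-1)^n = 1" by (simp flip: power_add)
    have "((-1/2) gchoose n) * (-t)^n = ((-1)^n * (-1)^n) * (pochhammer (1/2) n / fact n) * t^n"
      unfolding e1 e2 by (simp only: mult_ac times_divide_eq_left times_divide_eq_right)
    then show ?thesis unfolding e3 bb_def by simp
  qed
  ultimately show ?thesis by simp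
qed

lemma Beta_half: "Beta (real k + 1/2) (1/2) = pi * bb k"
proof -
  have nz: "(1/2::real) \<notin> \<int>\<^sub>\<le>\<^sub>0"
    by (auto elim!: nonpos_Ints_cases)
  have g0: "Gamma (1/2::real) \<noteq> 0"
    using nz by (simp add: Gamma_eq_zero_iff)
  have g1: "Gamma (1/2 + real k) = pochhammer (1/2) k * Gamma (1/2)"
    using pochhammer_Gamma[OF nz, of k] g0 by (simp add: field_simps)
  have g2: "Gamma (real k + 1/2 + 1/2) = fact k"
    using Gamma_fact[of k, where 'a=real] by (simp add: add.commute)
  show ?thesis
    unfolding Beta_def g2 using g1 Gamma_one_half_real
    by (simp add: bb_def add.commute)
qed

lemma L_beta: "(\<lambda>n. bb n / (2*n+2*k+1)) sums (pi * bb k / 2)"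
proof -
  have "(\<lambda>n. bb n * (1 / (real n + real k + 1/2))) sums Beta (real k + 1/2) (1/2)"
  proof (rule series_integral[where h="\<lambda>t. t powr (real k + 1/2 - 1)" and P="\<lambda>t. (1-t) powr (1/2 - 1)"])
    show "bb n \<ge> 0" for n by (rule bb_nonneg)
    show "0 \<le> t powr (real k + 1/2 - 1)" for t by simp
    show "(\<lambda>n. bb n * t^n) sums (1-t) powr (1/2 - 1)" if "0 \<le> t" "t < 1" for t
      using binom_ser that .
    show "((\<lambda>t. t powr (real k + 1/2 - 1) * (1 - t) powr (1/2 - 1)) has_integral Beta (real k + 1/2) (1/2)) {0..1}"
      by (rule has_integral_Beta_real) auto
    show "((\<lambda>t. t powr (real k + 1/2 - 1) * t^n) has_integral (1 / (real n + real k + 1/2))) {0..1}" for n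
    proof -
      have "((\<lambda>t. t powr (real n + real k - 1/2)) has_integral (1 powr (real n + real k - 1/2 + 1) / (real n + real k - 1/2 + 1))) {0..1}"
        by (rule has_integral_powr_from_0) auto
      then have A: "((\<lambda>t. t powr (real n + real k - 1/2)) has_integral (1 / (real n + real k + 1/2))) {0..1}"
        by (simp add: field_simps)
      have B: "t powr (real k + 1/2 - 1) * t^n = t powr (real n + real k - 1/2)" if "t \<in> {0..1}" for t
      proof (cases "t = 0")
        case False
        then have "t > 0" using that by auto
        then have "t^n = t powr (real n)" by (simp add: powr_realpow)
        then have "t powr (real k + 1/2 - 1) * t^n = t powr (real k + 1/2 - 1 + real n)"
          by (simp add: powr_add)
        also have "real k + 1/2 - 1 + real n = real n + real k - 1/2" by simp
        finally show ?thesis .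
      qed simp
      show ?thesis using A has_integral_cong[of "{0..1}" "\<lambda>t. t powr (real k + 1/2 - 1) * t^n" "\<lambda>t. t powr (real n + real k - 1/2)"] B
        by blast
    qed
  qed
  moreover have "bb n * (1 / (real n + real k + 1/2)) = 2 * (bb n / (2*n+2*k+1))" for n
    by (simp add: field_simps)
  ultimately have "(\<lambda>n. 2 * (bb n / (2*n+2*k+1))) sums (pi * bb k)"
    by (simp add: Beta_half)
  then have "(\<lambda>n. (2 * (bb n / (2*n+2*k+1))) / 2) sums (pi * bb k / 2)"
    by (rule sums_divide)
  moreover have "(\<lambda>n. (2 * (bb n / (2*n+2*k+1))) / 2) = (\<lambda>n. bb n / (2*n+2*k+1))"
    by (rule ext) (simp add: field_simps)
  ultimately show ?thesis by (simp only:)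
qed


lemma aux_frac: "0 < (u::real) \<Longrightarrow> u < 1 \<Longrightarrow> (1 / u - 1) / ((1-u)*(1+u)) = 1 / (u * (1 + u))"
proof -
  assume u: "0 < u" "u < 1"
  have "1 / u - 1 = (1-u)/u" using u by (simp add: field_simps)
  then have "(1 / u - 1) / ((1-u)*(1+u)) = (1-u) / ((1-u) * (u * (1+u)))"
    by (simp add: mult_ac)
  also have "\<dots> = 1 / (u * (1+u))" using u by (intro nonzero_divide_mult_cancel_left) simp
  finally show ?thesis .
qed

lemma ser_Suc:
  assumes "0 \<le> t" "t < 1"
  shows "(\<lambda>n. bb (Suc n) * t^n) sums (1 / (sqrt (1-t) * (1 + sqrt (1-t))))"
proof (cases "t = 0")
  case True
  have "bb (Suc 0) = 1/2" by (simp add: bb_def)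
  then show ?thesis using True powser_sums_zero[of "\<lambda>n. bb (Suc n)"] by simp
next
  case False
  then have tp: "t > 0" using assms by simp
  have s: "(\<lambda>n. bb n * t^n) sums (1-t) powr (1/2 - 1)" using binom_ser assms .
  have q: "(1-t) powr (1/2 - 1) = 1 / sqrt (1-t)"
    using assms by (simp add: powr_minus_divide powr_half_sqrt[symmetric] flip: powr_diff)
  have "(\<lambda>n. bb (Suc n) * t^(Suc n)) sums (1 / sqrt (1-t) - 1)"
    using s q by (subst sums_Suc_iff) (simp add: bb_def)
  then have "(\<lambda>n. bb (Suc n) * t^(Suc n) / t) sums ((1 / sqrt (1-t) - 1) / t)"
    by (rule sums_divide)
  moreover have "(\<lambda>n. bb (Suc n) * t^(Suc n) / t) = (\<lambda>n. bb (Suc n) * t^n)"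
    using tp by (intro ext) simp
  moreover have "(1 / sqrt (1-t) - 1) / t = 1 / (sqrt (1-t) * (1 + sqrt (1-t)))"
  proof -
    define u where "u = sqrt (1-t)"
    have u0: "u > 0" "u < 1" using assms tp by (auto simp: u_def)
    have tu: "t = (1-u)*(1+u)" using assms by (simp add: u_def algebra_simps)
    show ?thesis unfolding u_def[symmetric] using aux_frac[OF u0] tu by simp
  qed
  ultimately show ?thesis by simp
qed

lemma aux2: "0 < (u::real) \<Longrightarrow> inverse u * 2 / (2 + u * 2) = 1 / (u * (1 + u))"
  by (metis (no_types, opaque_lifting) add_frac_num divide_divide_eq_left
    divide_divide_eq_right inverse_eq_divide right_inverse_eq
    zero_neq_numeral)

lemma int_ln: "((\<lambda>t. 1 * (1 / (sqrt (1-t) * (1 + sqrt (1-t))))) has_integral (2 * ln 2)) {0..1}"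
proof -
  define F where "F t = - 2 * ln (1 + sqrt (1-t))" for t :: real
  have "((\<lambda>t. 1 / (sqrt (1-t) * (1 + sqrt (1-t)))) has_integral (F 1 - F 0)) {0..1}"
  proof (rule fundamental_theorem_of_calculus_interior)
    show "continuous_on {0..1} F"
    proof -
      have pos: "1 + sqrt (1-x) \<noteq> 0" if "x \<in> {0..1}" for x :: real
      proof -
        have "sqrt (1-x) \<ge> 0" using that by simp
        then show ?thesis by linarith
      qed
      show ?thesis unfolding F_def using pos by (auto intro!: continuous_intros)
    qed
    show "(F has_vector_derivative 1 / (sqrt (1-t) * (1 + sqrt (1-t)))) (at t)" if "t \<in> {0<..<1}" for t
    proof -
      have t: "0 < t" "t < 1" using that by auto
      have s: "sqrt (1-t) > 0" using t by simp
      have "(F has_real_derivative 1 / (sqrt (1-t) * (1 + sqrt (1-t)))) (at t)"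
        unfolding F_def using t s
        by (auto intro!: derivative_eq_intros simp: add_pos_nonneg aux2)
      then show ?thesis by (simp add: has_real_derivative_iff_has_vector_derivative)
    qed
  qed simp
  moreover have "F 1 - F 0 = 2 * ln 2" by (simp add: F_def)
  ultimately show ?thesis by simp
qed

lemma L_ln: "(\<lambda>n. bb (Suc n) * (1 / (real n + 1))) sums (2 * ln 2)"
proof (rule series_integral[where h="\<lambda>t. 1" and P="\<lambda>t. 1 / (sqrt (1-t) * (1 + sqrt (1-t)))"])
  show "bb (Suc n) \<ge> 0" for n by (rule bb_nonneg)
  show "(\<lambda>n. bb (Suc n) * t^n) sums (1 / (sqrt (1-t) * (1 + sqrt (1-t))))" if "0 \<le> t" "t < 1" for t
    using ser_Suc that .
  show "((\<lambda>t. 1 * (1 / (sqrt (1-t) * (1 + sqrt (1-t))))) has_integral (2 * ln 2)) {0..1}"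
    by (rule int_ln)
  show "((\<lambda>t. 1 * t^n) has_integral (1 / (real n + 1))) {0..1}" for n
  proof -
    have A: "((\<lambda>t. t powr (real n)) has_integral (1 powr (real n + 1) / (real n + 1))) {0..1}"
      by (rule has_integral_powr_from_0) auto
    then have A': "((\<lambda>t. t powr (real n)) has_integral (1 / (real n + 1))) {0..1}" by simp
    show ?thesis
      by (rule has_integral_spike_finite[where S="{0}", OF _ _ A']) (auto simp: powr_realpow)
  qed
qed simp

definition aa :: "nat \<Rightarrow> real" where "aa k = pochhammer 2 k / pochhammer (5/2) k"

lemma aa_0: "aa 0 = 1" by (simp add: aa_def)

lemma aa_nonneg: "aa k \<ge> 0"
  by (simp add: aa_def pochhammer_nonneg)

lemma aa_Suc: "aa (Suc k) = aa k * (2*k+4) / (2*k+5)"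
proof -
  have p: "pochhammer (5/2) k > (0::real)" by (intro pochhammer_pos) simp
  show ?thesis unfolding aa_def pochhammer_Suc using p by (simp add: field_simps)
qed

lemma aa_sq: "aa k ^ 2 \<le> 2 / (real k + 2)"
proof (induction k)
  case 0 then show ?case by (simp add: aa_0)
next
  case (Suc k)
  have r: "aa (Suc k) ^ 2 = aa k ^ 2 * ((2*k+4) / (2*k+5))^2"
    by (simp add: aa_Suc power_mult_distrib power_divide)
  have "aa k ^ 2 * ((2*k+4) / (2*k+5))^2 \<le> 2 / (real k + 2) * ((2*k+4) / (2*k+5))^2"
    using Suc by (intro mult_right_mono) auto
  also have "\<dots> \<le> 2 / (real (Suc k) + 2)"
  proof -
    have "2 / (real k + 2) * ((2*k+4) / (2*k+5))^2 = 8 * (real k + 2) / (2*k+5)^2"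
      by (simp add: divide_simps power2_eq_square) (simp add: algebra_simps)
    also have "\<dots> \<le> 2 / (real k + 3)"
      by (simp add: divide_simps power2_eq_square) (simp add: algebra_simps)
    finally show ?thesis by (simp add: add.commute)
  qed
  finally show ?case using r by simp
qed

lemma aa_lim: "aa \<longlonglongrightarrow> 0"
proof -
  have "(\<lambda>k. aa k ^ 2) \<longlonglongrightarrow> 0"
  proof (rule tendsto_sandwich[of "\<lambda>_. 0" _ _ "\<lambda>k. 2 / (real k + 2)"])
    show "\<forall>\<^sub>F n in sequentially. 0 \<le> aa n ^ 2" by simp
    show "\<forall>\<^sub>F n in sequentially. aa n ^ 2 \<le> 2 / (real n + 2)" using aa_sq by simp
    show "(\<lambda>k. 2 / (real k + 2)) \<longlonglongrightarrow> 0" by real_asymp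
  qed simp
  then have "(\<lambda>k. sqrt (aa k ^ 2)) \<longlonglongrightarrow> sqrt 0" by (intro tendsto_real_sqrt)
  then show ?thesis using aa_nonneg by simp
qed

definition Oh :: "nat \<Rightarrow> real" where "Oh n = (\<Sum>j\<le>n. 1 / (2 * real j + 1))"

definition TT :: "nat \<Rightarrow> nat \<Rightarrow> real" where "TT m n = (2*n+1) * bb n * aa (m+n) / (m+1)"

lemma TT_base: "(\<lambda>m. TT m 0) sums 3"
proof -
  define G where "G m = (2*real m+3) * aa m / (real m+1)" for m
  have G: "G m - G (Suc m) = TT m 0" for m
    unfolding G_def TT_def by (simp add: aa_Suc bb_def divide_simps) (simp add: algebra_simps)
  have "G \<longlonglongrightarrow> 0 * 2"
  proof -
    have "(\<lambda>m. aa m * ((2*real m+3) / (real m+1))) \<longlonglongrightarrow> 0 * 2"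
      by (intro tendsto_mult aa_lim) real_asymp
    moreover have "G = (\<lambda>m. aa m * ((2*real m+3) / (real m+1)))"
      by (rule ext) (simp add: G_def)
    ultimately show ?thesis by simp
  qed
  then have "(\<lambda>m. G m - G (Suc m)) sums (G 0 - 0)" by (intro telescope_sums') simp
  moreover have "G 0 = 3" by (simp add: G_def aa_0)
  ultimately show ?thesis using G by simp
qed

lemma TT_step: "TT m (Suc n) = TT m n + (2*n+1)*bb n/(n+1) * (aa (m+n) - aa (Suc (m+n)))"
  unfolding TT_def by (simp add: bb_Suc aa_Suc divide_simps) (simp add: algebra_simps)

lemma qq: "(2*real n+1) * bb n * aa n / (real n+1) = 3 / (2*real n+3)"
proof (induction n)
  case 0 then show ?case by (simp add: aa_0 bb_def)
next
  case (Suc n)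
  have "(2*real (Suc n)+1) * bb (Suc n) * aa (Suc n) / (real (Suc n)+1)
      = ((2*real n+1) * bb n * aa n / (real n+1)) * ((2*n+3)/(2*n+5))"
    by (simp add: bb_Suc aa_Suc divide_simps) (simp add: algebra_simps)
  also have "\<dots> = 3 / (2 * real (Suc n) + 3)" unfolding Suc by (simp add: divide_simps) (simp add: algebra_simps)
  finally show ?case .
qed

lemma TT_sums: "(\<lambda>m. TT m n) sums (3 * Oh n)"
proof (induction n)
  case 0 then show ?case using TT_base by (simp add: Oh_def)
next
  case (Suc n)
  define c where "c = (2*real n+1)*bb n/(real n+1)"
  have l: "(\<lambda>m. aa (m+n)) \<longlonglongrightarrow> 0"
    using LIMSEQ_ignore_initial_segment[OF aa_lim, of n] by simp
  have "(\<lambda>m. aa (m+n) - aa (Suc m + n)) sums (aa (0+n) - 0)"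
    using telescope_sums'[OF l] by simp
  then have "(\<lambda>m. c * (aa (m+n) - aa (Suc (m+n)))) sums (c * aa n)"
    by (intro sums_mult) simp
  then have "(\<lambda>m. TT m n + c * (aa (m+n) - aa (Suc (m+n)))) sums (3 * Oh n + c * aa n)"
    using Suc by (intro sums_add)
  moreover have "c * aa n = 3 / (2 * real n + 3)" using qq[of n] by (simp add: c_def)
  moreover have "Oh (Suc n) = Oh n + 1 / (2 * real n + 3)"
    by (simp add: Oh_def add.commute)
  ultimately show ?case by (simp add: TT_step c_def algebra_simps)
qed


lemma double_has_sum:
  fixes f :: "nat \<times> nat \<Rightarrow> real"
  assumes f0: "\<And>x y. f (x,y) \<ge> 0"
    and fx: "\<And>x. ((\<lambda>y. f (x,y)) has_sum g x) UNIV"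
    and g: "(g has_sum S) UNIV"
  shows "(f has_sum S) UNIV"
proof -
  have "f summable_on Sigma UNIV (\<lambda>_. UNIV)"
    by (rule summable_on_SigmaI[OF fx]) (use g f0 in \<open>auto simp: summable_on_def\<close>)
  then have "(f has_sum S) (Sigma UNIV (\<lambda>_. UNIV))"
    by (intro has_sum_SigmaI[OF fx g])
  then show ?thesis by simp
qed

lemma double_swap:
  fixes f :: "nat \<times> nat \<Rightarrow> real"
  assumes f0: "\<And>x y. f (x,y) \<ge> 0"
    and fy: "\<And>y. ((\<lambda>x. f (x,y)) has_sum g y) UNIV"
    and g: "(g has_sum S) UNIV"
    and fx: "\<And>x. ((\<lambda>y. f (x,y)) has_sum h x) UNIV"
  shows "(h has_sum S) UNIV"
proof -
  define f' where "f' = (\<lambda>(y,x). f (x,y))"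
  have "(f' has_sum S) UNIV"
    by (rule double_has_sum[where g=g]) (use f0 fy g in \<open>auto simp: f'_def\<close>)
  then have "(f' has_sum S) (UNIV \<times> UNIV)" by simp
  then have "((\<lambda>(x,y). f' (y,x)) has_sum S) (UNIV \<times> UNIV)"
    using has_sum_swap[where f=f' and S=S and A="UNIV::nat set" and B="UNIV::nat set"] by blast
  moreover have "(\<lambda>(x,y). f' (y,x)) = f" by (auto simp: f'_def)
  ultimately have "(f has_sum S) (Sigma UNIV (\<lambda>_. UNIV))" by simp
  then show ?thesis by (rule has_sum_SigmaD) (use fx in auto)
qed

lemma double_has_sum2:
  fixes f :: "nat \<times> nat \<Rightarrow> real"
  assumes f0: "\<And>x y. f (x,y) \<ge> 0"
    and fy: "\<And>y. ((\<lambda>x. f (x,y)) has_sum g y) UNIV"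
    and g: "(g has_sum S) UNIV"
  shows "(f has_sum S) UNIV"
proof -
  define f' where "f' = (\<lambda>(y,x). f (x,y))"
  have "(f' has_sum S) UNIV"
    by (rule double_has_sum[where g=g]) (use f0 fy g in \<open>auto simp: f'_def\<close>)
  then have "(f' has_sum S) (UNIV \<times> UNIV)" by simp
  then have "((\<lambda>(x,y). f' (y,x)) has_sum S) (UNIV \<times> UNIV)"
    using has_sum_swap[where f=f' and S=S and A="UNIV::nat set" and B="UNIV::nat set"] by blast
  moreover have "(\<lambda>(x,y). f' (y,x)) = f" by (auto simp: f'_def)
  ultimately show ?thesis by simp
qed

definition ee :: "nat \<Rightarrow> nat \<Rightarrow> real" where "ee n k = 1 / (2*real k+1) - 1 / (2*real k + 2*real n + 3)"

lemma ee_nonneg: "ee n k \<ge> 0"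
  unfolding ee_def by (simp add: frac_le)

lemma ee_sums: "(\<lambda>k. ee n k) sums Oh n"
proof (induction n)
  case 0
  define g where "g k = 1 / (2*real k+1)" for k
  have "g \<longlonglongrightarrow> 0" unfolding g_def by real_asymp
  then have "(\<lambda>k. g k - g (Suc k)) sums (g 0 - 0)" by (rule telescope_sums')
  moreover have "g k - g (Suc k) = ee 0 k" for k by (simp add: g_def ee_def add.commute)
  ultimately show ?case by (simp add: g_def Oh_def)
next
  case (Suc n)
  define g where "g k = 1 / (2*real k+2*real n+3)" for k
  have "g \<longlonglongrightarrow> 0" unfolding g_def by real_asymp
  then have "(\<lambda>k. g k - g (Suc k)) sums (g 0 - 0)" by (rule telescope_sums')
  then have "(\<lambda>k. ee n k + (g k - g (Suc k))) sums (Oh n + (g 0 - 0))"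
    using Suc by (intro sums_add)
  moreover have "ee n k + (g k - g (Suc k)) = ee (Suc n) k" for k
    by (simp add: g_def ee_def algebra_simps)
  moreover have "Oh (Suc n) = Oh n + g 0"
    by (simp add: Oh_def g_def add.commute)
  ultimately show ?case by simp
qed

lemma w_has_sum:
  "((\<lambda>k. 1/((2*real k+1)*(2*real k+2)) * (pi/2) + 1/(2*real k+2) * (pi * bb (Suc k) / 2)) has_sum (pi * ln 2)) UNIV"
proof -
  have h1: "(\<lambda>k. inverse (real (2*k+1)) - inverse (real (2*k+2))) sums ln 2"
    by (rule alternating_harmonic_series_sums')
  have "inverse (real (2*k+1)) - inverse (real (2*k+2)) = 1/((2*real k+1)*(2*real k+2))" for k
    by (simp add: divide_simps) (simp add: algebra_simps)
  with h1 have a1: "(\<lambda>k. 1/((2*real k+1)*(2*real k+2))) sums ln 2" by simp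
  have a2: "(\<lambda>k. 1/(2*real k+2) * bb (Suc k)) sums ln 2"
  proof -
    have "(\<lambda>n. bb (Suc n) * (1 / (real n + 1)) / 2) sums (2 * ln 2 / 2)"
      by (intro sums_divide L_ln)
    moreover have "(\<lambda>n. bb (Suc n) * (1 / (real n + 1)) / 2) = (\<lambda>k. 1/(2*real k+2) * bb (Suc k))"
      by (rule ext) (simp add: divide_simps)
    moreover have "2 * ln 2 / 2 = (ln 2 :: real)" by simp
    ultimately show ?thesis by (simp only:)
  qed
  have "(\<lambda>k. 1/((2*real k+1)*(2*real k+2)) * (pi/2) + 1/(2*real k+2) * bb (Suc k) * (pi/2)) sums (ln 2 * (pi/2) + ln 2 * (pi/2))"
    by (intro sums_add sums_mult2 a1 a2)
  then have "(\<lambda>k. 1/((2*real k+1)*(2*real k+2)) * (pi/2) + 1/(2*real k+2) * (pi * bb (Suc k) / 2)) sums (pi * ln 2)"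
    by (simp add: algebra_simps)
  then show ?thesis
    by (rule sums_nonneg_imp_has_sum) (intro add_nonneg_nonneg mult_nonneg_nonneg; simp add: bb_nonneg)
qed

lemma main_sum: "((\<lambda>n. bb n / (2*real n+1) * Oh n) has_sum (pi * ln 2)) UNIV"
proof (rule double_swap[where f="\<lambda>(n,k). bb n / (2*real n+1) * ee n k"])
  show "\<And>x y. 0 \<le> (\<lambda>(n,k). bb n / (2*real n+1) * ee n k) (x,y)"
    by (simp add: bb_nonneg ee_nonneg)
  show "((\<lambda>y. (\<lambda>(n,k). bb n / (2*real n+1) * ee n k) (x,y)) has_sum (bb x / (2*real x+1) * Oh x)) UNIV" for x
    unfolding prod.case by (rule sums_nonneg_imp_has_sum[OF sums_mult[OF ee_sums]]) (simp add: bb_nonneg ee_nonneg)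
  show "((\<lambda>x. (\<lambda>(n,k). bb n / (2*real n+1) * ee n k) (x,y)) has_sum
          (1/((2*real y+1)*(2*real y+2)) * (pi/2) + 1/(2*real y+2) * (pi * bb (Suc y) / 2))) UNIV" for y
  proof -
    define A where "A = 1/((2*real y+1)*(2*real y+2))"
    define B where "B = 1/(2*real y+2)"
    have s1: "(\<lambda>n. bb n / (2*n+2*0+1)) sums (pi * bb 0 / 2)" by (rule L_beta)
    have s2: "(\<lambda>n. bb n / (2*n+2*(Suc y)+1)) sums (pi * bb (Suc y) / 2)" by (rule L_beta)
    have "(\<lambda>n. A * (bb n / (2*n+2*0+1)) + B * (bb n / (2*n+2*(Suc y)+1))) sums (A * (pi * bb 0 / 2) + B * (pi * bb (Suc y) / 2))"
      by (intro sums_add sums_mult s1 s2)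
    moreover have "A * (bb n / (2*n+2*0+1)) + B * (bb n / (2*n+2*(Suc y)+1)) = bb n / (2*real n+1) * ee n y" for n
      unfolding A_def B_def ee_def by (simp add: divide_simps) (simp add: algebra_simps)
    moreover have "bb 0 = 1" by (simp add: bb_def)
    ultimately have "(\<lambda>n. bb n / (2*real n+1) * ee n y) sums (A * (pi / 2) + B * (pi * bb (Suc y) / 2))"
      by simp
    then show ?thesis unfolding A_def B_def
      by (simp, intro sums_nonneg_imp_has_sum) (simp_all add: bb_nonneg ee_nonneg)
  qed
  show "((\<lambda>k. 1/((2*real k+1)*(2*real k+2)) * (pi/2) + 1/(2*real k+2) * (pi * bb (Suc k) / 2)) has_sum (pi * ln 2)) UNIV"
    by (rule w_has_sum)
qed

lemma kdf_eq: "kdf_term [2] [5/2] [1, 1] [2] [1/2, 1/2] [1] 1 1 (m,n) = TT m n * (bb n / (2*real n+1))"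
proof -
  have p1: "pochhammer (1::real) k = fact k" for k by (simp add: pochhammer_fact)
  have p2: "pochhammer (2::real) m = fact (Suc m)"
    using pochhammer_rec[of "1::real" m] by (simp add: pochhammer_fact)
  have p5: "pochhammer (5/2::real) (m+n) > 0" by (intro pochhammer_pos) simp
  show ?thesis
    unfolding kdf_term_def TT_def aa_def bb_def using p5
    by (simp add: p1 p2 divide_simps)
qed

theorem mainTheorem5:
  shows "(kdf_term [2] [5/2] [1, 1] [2] [1/2, 1/2] [1] 1 1 has_sum (3 * pi * ln 2)) UNIV"
proof (rule double_has_sum2[where g="\<lambda>n. 3 * (bb n / (2*real n+1) * Oh n)"])
  have TT0: "TT m n \<ge> 0" for m n by (simp add: TT_def bb_nonneg aa_nonneg)
  show "kdf_term [2] [5/2] [1, 1] [2] [1/2, 1/2] [1] 1 1 (x,y) \<ge> 0" for x y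
    unfolding kdf_eq using TT0 by (simp add: bb_nonneg)
  show "((\<lambda>m. kdf_term [2] [5/2] [1, 1] [2] [1/2, 1/2] [1] 1 1 (m,n)) has_sum (3 * (bb n / (2*real n+1) * Oh n))) UNIV" for n
  proof -
    have "(\<lambda>m. TT m n * (bb n / (2*real n+1))) sums (3 * Oh n * (bb n / (2*real n+1)))"
      by (intro sums_mult2 TT_sums)
    then have "(\<lambda>m. kdf_term [2] [5/2] [1, 1] [2] [1/2, 1/2] [1] 1 1 (m,n)) sums (3 * (bb n / (2*real n+1) * Oh n))"
      unfolding kdf_eq by (simp add: mult_ac)
    then show ?thesis
      by (rule sums_nonneg_imp_has_sum) (simp add: kdf_eq TT0 bb_nonneg)
  qed
  show "((\<lambda>n. 3 * (bb n / (2*real n+1) * Oh n)) has_sum (3 * pi * ln 2)) UNIV"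
    using has_sum_cmult_right[OF main_sum, of 3] by (simp add: mult_ac)
qed

end
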